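(* Let $c>0$ and let $f$ be a critical point of the free energy $F$ for one of the four kernels below, i.e. $f(P)=Z^{-1}\exp(-W(P))$ with $Z=\int e^{-W}d\nu$ and $W(P)=\int cG(P,P')f(P')\,d\nu(P')$, so that $$W(P)=c_1\,\bm p\cdot\bm m_1+(c_2Q_1+c_4Q_2):\bm m_1\bm m_1^T+(c_3Q_2+c_4Q_1):\bm m_2\bm m_2^T$$ (with the appropriate coefficients equal to zero). Let $R\in SO(3)$. Then: (a) For the $D_{\infty h}$ kernel $cG=c_2p_{11}^2$: $D_{\infty h}\subseteq R\mathcal J_fR^T$ if and only if $RQ_1R^T$ is diagonal with $(RQ_1R^T)_{22}=(RQ_1R^T)_{33}$. (b) For the $C_{\infty v}$ kernel $cG=c_1p_{11}+c_2p_{11}^2$: $C_{\infty v}\subseteq R\mathcal J_fR^T$ if and only if $RQ_1R^T$ is diagonal with $(RQ_1R^T)_{22}=(RQ_1R^T)_{33}$ and $(R\bm p)_2=(R\bm p)_3=0$. (c) For the $D_{2h}$ kernel $cG=c_2p_{11}^2+c_3p_{22}^2+c_4(p_{12}^2+p_{21}^2)$: $D_{2h}\subseteq R\mathcal J_fR^T$ if and only if both $RQ_1R^T$ and $RQ_2R^T$ are diagonal. (d) For the $C_{2v}$ kernel $cG=c_1p_{11}+c_2p_{11}^2+c_3p_{22}^2+c_4(p_{12}^2+p_{21}^2)$: $C_{2v}\subseteq R\mathcal J_fR^T$ if and only if $RQ_1R^T$ and $RQ_2R^T$ are diagonal and $(R\bm p)_2=(R\bm p)_3=0$.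
   Context: Orientations are $P\in SO(3)$ with body frame $\bm m_i(P)=P\bm e_i$ (columns of $P$); $\nu$ is the normalized Haar measure on $SO(3)$; $p_{ij}=\bm m_i(P)\cdot\bm m_j(P')$. The free energy of a probability density $f$ on $SO(3)$ is $F[f]=\int f\log f\,d\nu+\frac12\iint f(P)cG(P,P')f(P')\,d\nu\,d\nu$. Moments: $\bm p=\langle\bm m_1\rangle$, $Q_1=\langle\bm m_1\bm m_1^T\rangle$, $Q_2=\langle\bm m_2\bm m_2^T\rangle$ with $\langle u\rangle=\int uf\,d\nu$; $A:B=\mathrm{tr}(A^TB)$. Point groups (rotation axis along the first coordinate): with $R_1=\mathrm{diag}(1,-1,-1)$, $R_2=\mathrm{diag}(-1,1,-1)$, $R_3=\mathrm{diag}(-1,-1,1)$, $J_3=\mathrm{diag}(1,1,-1)$, $D_{\infty h}=D_\infty\cup D_\infty J_3$ where $D_\infty=\left\{\begin{pmatrix}\pm1&0&0\\0&\pm\cos\theta&-\sin\theta\\0&\pm\sin\theta&\cos\theta\end{pmatrix}\right\}$ (signs taken together, $\theta\in\mathbb R$); $C_{\infty v}=C_\infty\cup C_\infty J_3$ where $C_\infty=\left\{\begin{pmatrix}1&0&0\\0&\cos\theta&-\sin\theta\\0&\sin\theta&\cos\theta\end{pmatrix}\right\}$; $D_{2h}=\{I,R_1,R_2,R_3\}\cup\{J_3,J_3R_1,J_3R_2,J_3R_3\}$; $C_{2v}=\{I,R_1\}\cup\{J_3,J_3R_1\}$. For each kernel, the molecular symmetry group $\mathcal H$ is the group with the same name ($D_{\infty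 h}$, $C_{\infty v}$, $D_{2h}$, $C_{2v}$ respectively), and $\mathcal H^-$ denotes its elements of determinant $-1$. The phase symmetry group $\mathcal J_f$ is the set of $T\in O(3)$ such that: if $\det T=1$ then $f(TP)=f(P)$ for all $P\in SO(3)$; if $\det T=-1$ then $f(TPJ)=f(P)$ for all $P\in SO(3)$ and all $J\in\mathcal H^-$. *)

theory Defs
  imports "HOL-Probability.Probability"
begin

type_synonym mat3 = "real^3^3"

definition SO3 :: "mat3 set" where
  "SO3 = {P. rotation_matrix P}"

definition mat3 :: "real \<Rightarrow> real \<Rightarrow> real \<Rightarrow> real \<Rightarrow> real \<Rightarrow> real \<Rightarrow> real \<Rightarrow> real \<Rightarrow> real \<Rightarrow> mat3" where
  "mat3 a11 a12 a13 a21 a22 a23 a31 a32 a33 =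
     vector [vector [a11, a12, a13], vector [a21, a22, a23], vector [a31, a32, a33]]"

definition diag3 :: "real \<Rightarrow> real \<Rightarrow> real \<Rightarrow> mat3" where
  "diag3 a b c = mat3 a 0 0 0 b 0 0 0 c"

definition R1 :: mat3 where "R1 = diag3 1 (-1) (-1)"
definition R2 :: mat3 where "R2 = diag3 (-1) 1 (-1)"
definition R3 :: mat3 where "R3 = diag3 (-1) (-1) 1"
definition J3 :: mat3 where "J3 = diag3 1 1 (-1)"

definition D_inf :: "mat3 set" where
  "D_inf = {mat3 s 0 0 0 (s * cos \<theta>) (- sin \<theta>) 0 (s * sin \<theta>) (cos \<theta>) | s \<theta>. s = 1 \<or> s = -1}"
definition D_inf_h :: "mat3 set" where
  "D_inf_h = D_inf \<union> (\<lambda>A. A ** J3) ` D_inf"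

definition C_inf :: "mat3 set" where
  "C_inf = {mat3 1 0 0 0 (cos \<theta>) (- sin \<theta>) 0 (sin \<theta>) (cos \<theta>) | \<theta>. True}"
definition C_inf_v :: "mat3 set" where
  "C_inf_v = C_inf \<union> (\<lambda>A. A ** J3) ` C_inf"

definition D_2h :: "mat3 set" where
  "D_2h = {mat 1, R1, R2, R3} \<union> {J3, J3 ** R1, J3 ** R2, J3 ** R3}"
definition C_2v :: "mat3 set" where
  "C_2v = {mat 1, R1} \<union> {J3, J3 ** R1}"

definition m1 :: "mat3 \<Rightarrow> real^3" where "m1 P = column 1 P"
definition m2 :: "mat3 \<Rightarrow> real^3" where "m2 P = column 2 P"

definition kern :: "real \<Rightarrow> real \<Rightarrow> real \<Rightarrow> real \<Rightarrow> mat3 \<Rightarrow> mat3 \<Rightarrow> real" where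
  "kern c1 c2 c3 c4 P P' =
     c1 * (m1 P \<bullet> m1 P') + c2 * (m1 P \<bullet> m1 P')^2 + c3 * (m2 P \<bullet> m2 P')^2
     + c4 * ((m1 P \<bullet> m2 P')^2 + (m2 P \<bullet> m1 P')^2)"

(* normalized Haar measure on SO(3), characterised as the (unique) probability
   measure on the Borel sets of 3x3 matrices, concentrated on SO(3), invariant
   under left and right multiplication by rotations *)
definition haar_SO3 :: "mat3 measure \<Rightarrow> bool" where
  "haar_SO3 \<nu> \<longleftrightarrow> prob_space \<nu> \<and> sets \<nu> = sets borel \<and> emeasure \<nu> SO3 = 1 \<and>
     (\<forall>T. rotation_matrix T \<longrightarrow>
        distr \<nu> borel (\<lambda>P. T ** P) = \<nu> \<and> distr \<nu> borel (\<lambda>P. P ** T) = \<nu>)"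

definition crit_point :: "mat3 measure \<Rightarrow> (mat3 \<Rightarrow> mat3 \<Rightarrow> real) \<Rightarrow> (mat3 \<Rightarrow> real) \<Rightarrow> bool" where
  "crit_point \<nu> cG f \<longleftrightarrow>
     integrable \<nu> f \<and> (\<forall>P\<in>SO3. 0 \<le> f P) \<and> (\<integral>P. f P \<partial>\<nu>) = 1 \<and>
     (let W = (\<lambda>P. \<integral>P'. cG P P' * f P' \<partial>\<nu>);
          Z = (\<integral>P. exp (- W P) \<partial>\<nu>)
      in \<forall>P\<in>SO3. f P = exp (- W P) / Z)"

definition outer :: "real^3 \<Rightarrow> real^3 \<Rightarrow> mat3" where
  "outer u v = (\<chi> i j. u $ i * v $ j)"

definition mom_p :: "mat3 measure \<Rightarrow> (mat3 \<Rightarrow> real) \<Rightarrow> real^3" where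
  "mom_p \<nu> f = (\<integral>P. f P *\<^sub>R m1 P \<partial>\<nu>)"
definition mom_Q1 :: "mat3 measure \<Rightarrow> (mat3 \<Rightarrow> real) \<Rightarrow> mat3" where
  "mom_Q1 \<nu> f = (\<integral>P. f P *\<^sub>R outer (m1 P) (m1 P) \<partial>\<nu>)"
definition mom_Q2 :: "mat3 measure \<Rightarrow> (mat3 \<Rightarrow> real) \<Rightarrow> mat3" where
  "mom_Q2 \<nu> f = (\<integral>P. f P *\<^sub>R outer (m2 P) (m2 P) \<partial>\<nu>)"

definition phase_group :: "mat3 set \<Rightarrow> (mat3 \<Rightarrow> real) \<Rightarrow> mat3 set" where
  "phase_group H f = {T. orthogonal_matrix T \<and>
     (det T = 1 \<longrightarrow> (\<forall>P\<in>SO3. f (T ** P) = f P)) \<and>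
     (det T = -1 \<longrightarrow> (\<forall>P\<in>SO3. \<forall>J\<in>{J\<in>H. det J = -1}. f (T ** P ** J) = f P))}"

definition conj_set :: "mat3 \<Rightarrow> mat3 set \<Rightarrow> mat3 set" where
  "conj_set R S = (\<lambda>T. R ** T ** transpose R) ` S"

definition is_diag :: "mat3 \<Rightarrow> bool" where
  "is_diag A \<longleftrightarrow> (\<forall>i j. i \<noteq> j \<longrightarrow> A $ i $ j = 0)"

end

theory Submission
  imports Defs
begin



lemma cont_m1: "continuous_on UNIV (m1)"
  unfolding m1_def column_def by (intro continuous_intros)
lemma cont_m2: "continuous_on UNIV (m2)"
  unfolding m2_def column_def by (intro continuous_intros)
lemma cont_outer1: "continuous_on UNIV (\<lambda>P. outer (m1 P) (m1 P))"
  unfolding m1_def column_def outer_def by (intro continuous_intros)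
lemma cont_mul: "continuous_on UNIV (\<lambda>P::mat3. T ** P ** J)"
  unfolding matrix_matrix_mult_def by (intro continuous_intros)



locale setting =
  fixes \<nu> :: "mat3 measure" and f :: "mat3 \<Rightarrow> real" and c1 c2 c3 c4 :: real
  assumes haar: "haar_SO3 \<nu>" and crit: "crit_point \<nu> (kern c1 c2 c3 c4) f"
begin

lemma prob: "prob_space \<nu>" using haar by (simp add: haar_SO3_def)
lemma sets_nu: "sets \<nu> = sets borel" using haar by (simp add: haar_SO3_def)
lemma space_nu: "space \<nu> = UNIV" using sets_eq_imp_space_eq[OF sets_nu] by simp
lemma meas_nu: "measurable \<nu> N = measurable borel N"
  by (rule measurable_cong_sets[OF sets_nu refl])
lemma SO3_sets: "SO3 \<in> sets \<nu>"
  using haar emeasure_notin_sets[of SO3 \<nu>] by (auto simp: haar_SO3_def)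
lemma AE_SO3: "AE P in \<nu>. P \<in> SO3"
proof -
  interpret prob_space \<nu> by (rule prob)
  have "Measurable.pred \<nu> (\<lambda>x. x \<in> SO3)" using SO3_sets by measurable
  moreover have "{x\<in>space \<nu>. x \<in> SO3} = SO3" using space_nu by auto
  ultimately show ?thesis using AE_iff_emeasure_eq_1 haar by (simp add: haar_SO3_def)
qed

lemma f_int: "integrable \<nu> f" using crit by (simp add: crit_point_def)
lemma f_meas: "f \<in> borel_measurable borel"
  using borel_measurable_integrable[OF f_int] by (simp add: measurable_cong_sets[OF sets_nu refl])

lemma bm_cont: "continuous_on UNIV g \<Longrightarrow> g \<in> borel_measurable \<nu>"
  using borel_measurable_continuous_onI by (simp add: measurable_cong_sets[OF sets_nu refl])

lemma norm_col: "P \<in> SO3 \<Longrightarrow> norm (column i P) = 1"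
  by (simp add: SO3_def rotation_matrix_def orthogonal_matrix_orthonormal_columns)

lemma norm_m1: "P \<in> SO3 \<Longrightarrow> norm (m1 P) = 1" by (simp add: m1_def norm_col)
lemma norm_m2: "P \<in> SO3 \<Longrightarrow> norm (m2 P) = 1" by (simp add: m2_def norm_col)

lemma norm_outer: "norm (outer u v) \<le> 3 * (norm u * norm v)"
proof -
  have "norm (outer u v) \<le> (\<Sum>i\<in>UNIV. norm (outer u v $ i))"
    by (simp add: norm_vec_def L2_set_le_sum)
  also have "\<dots> \<le> (\<Sum>i\<in>(UNIV::3 set). norm u * norm v)"
  proof (rule sum_mono)
    fix i :: 3
    have "outer u v $ i = u $ i *\<^sub>R v" by (simp add: outer_def vec_eq_iff)
    then show "norm (outer u v $ i) \<le> norm u * norm v"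
      using component_le_norm_cart[of u i] by (simp add: mult_right_mono)
  qed
  finally show ?thesis by simp
qed

lemma int_bound:
  fixes g :: "mat3 \<Rightarrow> 'b::{banach, second_countable_topology}"
  assumes "continuous_on UNIV g" "\<And>P. P \<in> SO3 \<Longrightarrow> norm (g P) \<le> K"
  shows "integrable \<nu> (\<lambda>P. f P *\<^sub>R g P)"
proof (rule Bochner_Integration.integrable_bound[where f="\<lambda>P. \<bar>K\<bar> * f P"])
  show "integrable \<nu> (\<lambda>P. \<bar>K\<bar> * f P)" using f_int by simp
  show "(\<lambda>P. f P *\<^sub>R g P) \<in> borel_measurable \<nu>"
    using bm_cont[OF assms(1)] borel_measurable_integrable[OF f_int] by measurable
  show "AE P in \<nu>. norm (f P *\<^sub>R g P) \<le> norm (\<bar>K\<bar> * f P)"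
    using AE_SO3
  proof eventually_elim
    case (elim P)
    have "norm (g P) \<le> \<bar>K\<bar>" using assms(2)[OF elim] by linarith
    then show ?case by (simp add: abs_mult mult.commute[of "\<bar>K\<bar>"] mult_left_mono)
  qed
qed


lemma int_p: "integrable \<nu> (\<lambda>P. f P *\<^sub>R m1 P)"
  by (rule int_bound[OF cont_m1, of 1]) (simp add: norm_m1)
lemma int_O1: "integrable \<nu> (\<lambda>P. f P *\<^sub>R outer (m1 P) (m1 P))"
proof (rule int_bound[OF cont_outer1, of 3])
  fix P assume "P \<in> SO3"
  then show "norm (outer (m1 P) (m1 P)) \<le> 3" using norm_outer[of "m1 P" "m1 P"] norm_m1 by simp
qed
lemma cont_outer2: "continuous_on UNIV (\<lambda>P. outer (m2 P) (m2 P))"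
  unfolding m2_def column_def outer_def by (intro continuous_intros)
lemma int_O2: "integrable \<nu> (\<lambda>P. f P *\<^sub>R outer (m2 P) (m2 P))"
proof (rule int_bound[OF cont_outer2, of 3])
  fix P assume "P \<in> SO3"
  then show "norm (outer (m2 P) (m2 P)) \<le> 3" using norm_outer[of "m2 P" "m2 P"] norm_m2 by simp
qed

end

definition qf :: "mat3 \<Rightarrow> real^3 \<Rightarrow> real" where "qf Q u = u \<bullet> (Q *v u)"

lemma qf_outer: "qf (a *\<^sub>R outer w w) u = a * (u \<bullet> w)^2"
  by (simp add: qf_def inner_vec_def matrix_vector_mult_def outer_def sum_3 power2_eq_square algebra_simps)

lemma bl_qf: "bounded_linear (\<lambda>X. qf X u)"
  by (rule bounded_linearI') (simp_all add: qf_def matrix_vector_mult_add_rdistrib inner_add_right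
      matrix_vector_mult_def inner_vec_def sum_3 algebra_simps)

context setting begin
lemma W_formula: "(\<integral>P'. kern c1 c2 c3 c4 P P' * f P' \<partial>\<nu>) =
   c1 * (m1 P \<bullet> mom_p \<nu> f) + c2 * qf (mom_Q1 \<nu> f) (m1 P) + c3 * qf (mom_Q2 \<nu> f) (m2 P)
   + c4 * (qf (mom_Q2 \<nu> f) (m1 P) + qf (mom_Q1 \<nu> f) (m2 P))"
proof -
  let ?g1 = "\<lambda>P'. f P' *\<^sub>R m1 P'"
  let ?g2 = "\<lambda>P'. f P' *\<^sub>R outer (m1 P') (m1 P')"
  let ?g3 = "\<lambda>P'. f P' *\<^sub>R outer (m2 P') (m2 P')"
  have eq: "\<And>P'. kern c1 c2 c3 c4 P P' * f P' = c1 * (m1 P \<bullet> ?g1 P') + c2 * qf (?g2 P') (m1 P)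
     + c3 * qf (?g3 P') (m2 P) + c4 * (qf (?g3 P') (m1 P) + qf (?g2 P') (m2 P))"
    by (simp add: kern_def qf_outer algebra_simps)
  have i1: "integral\<^sup>L \<nu> (\<lambda>P'. m1 P \<bullet> ?g1 P') = m1 P \<bullet> mom_p \<nu> f"
    using integral_bounded_linear[OF bounded_linear_inner_right int_p] by (simp add: mom_p_def)
  have i2: "integral\<^sup>L \<nu> (\<lambda>P'. qf (?g2 P') u) = qf (mom_Q1 \<nu> f) u" for u
    using integral_bounded_linear[OF bl_qf int_O1] by (simp add: mom_Q1_def)
  have i3: "integral\<^sup>L \<nu> (\<lambda>P'. qf (?g3 P') u) = qf (mom_Q2 \<nu> f) u" for u
    using integral_bounded_linear[OF bl_qf int_O2] by (simp add: mom_Q2_def)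
  have j1: "integrable \<nu> (\<lambda>P'. m1 P \<bullet> ?g1 P')"
    using integrable_bounded_linear[OF bounded_linear_inner_right int_p] by simp
  have j2: "integrable \<nu> (\<lambda>P'. qf (?g2 P') u)" for u
    using integrable_bounded_linear[OF bl_qf int_O1] by simp
  have j3: "integrable \<nu> (\<lambda>P'. qf (?g3 P') u)" for u
    using integrable_bounded_linear[OF bl_qf int_O2] by simp
  define a where "a = (\<lambda>P'. m1 P \<bullet> ?g1 P')"
  define b where "b = (\<lambda>u P'. qf (?g2 P') u)"
  define d where "d = (\<lambda>u P'. qf (?g3 P') u)"
  have eq': "(\<lambda>P'. kern c1 c2 c3 c4 P P' * f P') = (\<lambda>P'. c1 * a P' + c2 * b (m1 P) P'
     + c3 * d (m2 P) P' + c4 * (d (m1 P) P' + b (m2 P) P'))"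
    unfolding eq a_def b_def d_def by simp
  have "integrable \<nu> a" "\<And>u. integrable \<nu> (b u)" "\<And>u. integrable \<nu> (d u)"
    using j1 j2 j3 unfolding a_def b_def d_def by auto
  moreover have "integral\<^sup>L \<nu> a = m1 P \<bullet> mom_p \<nu> f" "\<And>u. integral\<^sup>L \<nu> (b u) = qf (mom_Q1 \<nu> f) u"
     "\<And>u. integral\<^sup>L \<nu> (d u) = qf (mom_Q2 \<nu> f) u"
    using i1 i2 i3 unfolding a_def b_def d_def by auto
  ultimately show ?thesis unfolding eq'
    by (simp add: integral_add)
qed
end




lemmas ex3 = vec_eq_iff forall_3 matrix_matrix_mult_def matrix_vector_mult_def sum_3 transpose_def
  outer_def inner_vec_def m1_def m2_def column_def

lemma col1_mult: fixes T J :: mat3 shows "(\<forall>l. J$l$1 = (if l = 1 then s else 0)) \<Longrightarrow> m1 (T ** P ** J) = s *\<^sub>R (T *v m1 P)"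
  by (simp add: ex3 algebra_simps)
lemma col2_mult: fixes T J :: mat3 shows "(\<forall>l. J$l$2 = (if l = 2 then s else 0)) \<Longrightarrow> m2 (T ** P ** J) = s *\<^sub>R (T *v m2 P)"
  by (simp add: ex3 algebra_simps)
lemma outer_T0: fixes T :: mat3 shows "outer (T *v u) (T *v u) = T ** outer u u ** transpose T"
  by (simp add: ex3 algebra_simps)
lemma outer_sc: "outer (s *\<^sub>R v) (s *\<^sub>R w) = (s * s) *\<^sub>R outer v w"
  by (simp add: ex3 algebra_simps)
lemma outer_T: fixes T :: mat3 shows "s^2 = 1 \<Longrightarrow> outer (s *\<^sub>R (T *v u)) (s *\<^sub>R (T *v u)) = T ** outer u u ** transpose T"
  by (simp only: outer_sc outer_T0 power2_eq_square) simp
lemma bl_conj: fixes T :: mat3 shows "bounded_linear (\<lambda>X::mat3. T ** X ** transpose T)"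
  by (rule bounded_linearI') (simp_all add: ex3 algebra_simps)
lemma bl_sT: fixes T :: mat3 shows "bounded_linear (\<lambda>v::real^3. s *\<^sub>R (T *v v))"
  by (rule bounded_linearI') (simp_all add: ex3 algebra_simps)
lemma qf_T: fixes T :: mat3 shows "qf Q (s *\<^sub>R (T *v u)) = s^2 * qf (transpose T ** Q ** T) u"
  by (simp add: qf_def ex3 algebra_simps power2_eq_square)
lemma inner_T: fixes T :: mat3 shows "(s *\<^sub>R (T *v u)) \<bullet> p = u \<bullet> (s *\<^sub>R (transpose T *v p))"
  by (simp add: ex3 algebra_simps)
lemma neg_mult: fixes T P :: mat3 shows "(-T) ** P ** (-J) = T ** P ** (J::mat3)"
  by (simp add: ex3 algebra_simps)
lemma neg_rot: "orthogonal_matrix (T::mat3) \<Longrightarrow> det T = -1 \<Longrightarrow> rotation_matrix (-T)"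
proof -
  assume o: "orthogonal_matrix T" and d: "det T = -1"
  have "transpose (-T) ** (-T) = transpose T ** T" by (simp add: ex3 algebra_simps)
  then have "orthogonal_matrix (-T)" using o by (simp add: orthogonal_matrix)
  moreover have "det (-T) = - det T" by (simp add: det_3 algebra_simps)
  ultimately show ?thesis using d by (simp add: rotation_matrix_def)
qed




definition Wm :: "real \<Rightarrow> real \<Rightarrow> real \<Rightarrow> real \<Rightarrow> real^3 \<Rightarrow> mat3 \<Rightarrow> mat3 \<Rightarrow> mat3 \<Rightarrow> real" where
  "Wm a1 a2 a3 a4 p Q1 Q2 P = a1 * (m1 P \<bullet> p) + a2 * qf Q1 (m1 P) + a3 * qf Q2 (m2 P)
   + a4 * (qf Q2 (m1 P) + qf Q1 (m2 P))"

context setting begin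

lemma phi_meas: fixes T J :: mat3 shows "(\<lambda>P. T ** P ** J) \<in> measurable \<nu> borel"
  using borel_measurable_continuous_onI[OF cont_mul] by (simp add: measurable_cong_sets[OF sets_nu refl])

lemma distr_rot:
  assumes "rotation_matrix T" "rotation_matrix J"
  shows "distr \<nu> borel (\<lambda>P. T ** P ** J) = \<nu>"
proof -
  have m1: "(\<lambda>P. T ** P) \<in> measurable \<nu> borel" using phi_meas[of T "mat 1"] by simp
  have m2: "(\<lambda>P::mat3. P ** J) \<in> measurable borel borel"
    using phi_meas[of "mat 1" J] by (simp add: measurable_cong_sets[OF sets_nu refl])
  have "distr \<nu> borel (\<lambda>P. T ** P ** J) = distr (distr \<nu> borel (\<lambda>P. T ** P)) borel (\<lambda>P. P ** J)"
    using distr_distr[OF m2 m1] by (simp add: comp_def)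
  also have "\<dots> = \<nu>" using haar assms by (simp add: haar_SO3_def)
  finally show ?thesis .
qed

lemma distr_orth:
  assumes "orthogonal_matrix T" "orthogonal_matrix J" "det T = det J"
  shows "distr \<nu> borel (\<lambda>P. T ** P ** J) = \<nu>"
proof (cases "det T = 1")
  case True then show ?thesis using assms distr_rot by (simp add: rotation_matrix_def)
next
  case False
  then have "det T = -1" using det_orthogonal_matrix[OF assms(1)] by auto
  then have "rotation_matrix (-T)" "rotation_matrix (-J)" using assms neg_rot by auto
  from distr_rot[OF this] show ?thesis by (simp add: neg_mult)
qed

lemma transform:
  fixes g :: "mat3 \<Rightarrow> 'b::{banach, second_countable_topology}"
  assumes "orthogonal_matrix T" "orthogonal_matrix J" "det T = det J"
    and inv: "\<forall>P\<in>SO3. f (T ** P ** J) = f P" and g: "continuous_on UNIV g"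
  shows "(\<integral>P. f P *\<^sub>R g P \<partial>\<nu>) = (\<integral>P. f P *\<^sub>R g (T ** P ** J) \<partial>\<nu>)"
proof -
  have gm: "g \<in> borel_measurable borel" using borel_measurable_continuous_onI[OF g] .
  have fm: "f \<in> borel_measurable borel" by (rule f_meas)
  have "(\<integral>P. f P *\<^sub>R g P \<partial>\<nu>) = (\<integral>P. f P *\<^sub>R g P \<partial>(distr \<nu> borel (\<lambda>P. T ** P ** J)))"
    using distr_orth[OF assms(1-3)] by simp
  also have "\<dots> = (\<integral>P. f (T ** P ** J) *\<^sub>R g (T ** P ** J) \<partial>\<nu>)"
    by (rule integral_distr[OF phi_meas]) (use gm fm in measurable)
  also have "\<dots> = (\<integral>P. f P *\<^sub>R g (T ** P ** J) \<partial>\<nu>)"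
  proof (rule integral_cong_AE)
    have pm: "(\<lambda>P. T ** P ** J) \<in> borel_measurable \<nu>" using phi_meas .
    show "(\<lambda>P. f (T ** P ** J) *\<^sub>R g (T ** P ** J)) \<in> borel_measurable \<nu>"
      using pm gm fm by measurable
    show "(\<lambda>P. f P *\<^sub>R g (T ** P ** J)) \<in> borel_measurable \<nu>"
      using pm gm fm by (simp add: measurable_cong_sets[OF sets_nu refl]) measurable
    show "AE P in \<nu>. f (T ** P ** J) *\<^sub>R g (T ** P ** J) = f P *\<^sub>R g (T ** P ** J)"
      using AE_SO3 by eventually_elim (simp add: inv)
  qed
  finally show ?thesis .
qed


lemma conj_scale: fixes T :: mat3 shows "T ** (a *\<^sub>R X) ** transpose T = a *\<^sub>R (T ** X ** transpose T)"
  by (simp add: ex3 algebra_simps)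

lemma nec:
  assumes o: "orthogonal_matrix T" "orthogonal_matrix J" "det T = det J"
    and inv: "\<forall>P\<in>SO3. f (T ** P ** J) = f P"
    and J1: "\<forall>l. J$l$1 = (if l = 1 then s else 0)" and J2: "\<forall>l. J$l$2 = (if l = 2 then s2 else 0)"
    and s: "s^2 = 1" "s2^2 = 1"
  shows "mom_p \<nu> f = s *\<^sub>R (T *v mom_p \<nu> f)"
    "mom_Q1 \<nu> f = T ** mom_Q1 \<nu> f ** transpose T"
    "mom_Q2 \<nu> f = T ** mom_Q2 \<nu> f ** transpose T"
proof -
  have "mom_p \<nu> f = (\<integral>P. f P *\<^sub>R m1 (T ** P ** J) \<partial>\<nu>)"
    unfolding mom_p_def by (rule transform[OF o inv cont_m1])
  also have "\<dots> = (\<integral>P. s *\<^sub>R (T *v (f P *\<^sub>R m1 P)) \<partial>\<nu>)"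
    using col1_mult[OF J1] by (simp add: algebra_simps)
  also have "\<dots> = s *\<^sub>R (T *v mom_p \<nu> f)"
    using integral_bounded_linear[OF bl_sT int_p] by (simp add: mom_p_def)
  finally show "mom_p \<nu> f = s *\<^sub>R (T *v mom_p \<nu> f)" .
  have "mom_Q1 \<nu> f = (\<integral>P. f P *\<^sub>R outer (m1 (T ** P ** J)) (m1 (T ** P ** J)) \<partial>\<nu>)"
    unfolding mom_Q1_def by (rule transform[OF o inv cont_outer1])
  also have "\<dots> = (\<integral>P. T ** (f P *\<^sub>R outer (m1 P) (m1 P)) ** transpose T \<partial>\<nu>)"
    using col1_mult[OF J1] outer_T[OF s(1)] by (simp add: conj_scale)
  also have "\<dots> = T ** mom_Q1 \<nu> f ** transpose T"
    using integral_bounded_linear[OF bl_conj int_O1] by (simp add: mom_Q1_def)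
  finally show "mom_Q1 \<nu> f = T ** mom_Q1 \<nu> f ** transpose T" .
  have "mom_Q2 \<nu> f = (\<integral>P. f P *\<^sub>R outer (m2 (T ** P ** J)) (m2 (T ** P ** J)) \<partial>\<nu>)"
    unfolding mom_Q2_def by (rule transform[OF o inv cont_outer2])
  also have "\<dots> = (\<integral>P. T ** (f P *\<^sub>R outer (m2 P) (m2 P)) ** transpose T \<partial>\<nu>)"
    using col2_mult[OF J2] outer_T[OF s(2)] by (simp add: conj_scale)
  also have "\<dots> = T ** mom_Q2 \<nu> f ** transpose T"
    using integral_bounded_linear[OF bl_conj int_O2] by (simp add: mom_Q2_def)
  finally show "mom_Q2 \<nu> f = T ** mom_Q2 \<nu> f ** transpose T" .
qed

lemma f_eqW: "P \<in> SO3 \<Longrightarrow> P' \<in> SO3 \<Longrightarrow>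
  Wm c1 c2 c3 c4 (mom_p \<nu> f) (mom_Q1 \<nu> f) (mom_Q2 \<nu> f) P' = Wm c1 c2 c3 c4 (mom_p \<nu> f) (mom_Q1 \<nu> f) (mom_Q2 \<nu> f) P
  \<Longrightarrow> f P' = f P"
proof -
  assume a: "P \<in> SO3" "P' \<in> SO3" and e: "Wm c1 c2 c3 c4 (mom_p \<nu> f) (mom_Q1 \<nu> f) (mom_Q2 \<nu> f) P' = Wm c1 c2 c3 c4 (mom_p \<nu> f) (mom_Q1 \<nu> f) (mom_Q2 \<nu> f) P"
  define Z where "Z = (\<integral>P. exp (- (\<integral>P'. kern c1 c2 c3 c4 P P' * f P' \<partial>\<nu>)) \<partial>\<nu>)"
  have fe: "\<forall>P\<in>SO3. f P = exp (- (\<integral>P'. kern c1 c2 c3 c4 P P' * f P' \<partial>\<nu>)) / Z"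
    using crit unfolding crit_point_def Let_def Z_def by blast
  have "f P' = exp (- Wm c1 c2 c3 c4 (mom_p \<nu> f) (mom_Q1 \<nu> f) (mom_Q2 \<nu> f) P') / Z"
    using fe a(2) unfolding W_formula Wm_def by simp
  also have "\<dots> = f P"
    using fe a(1) e unfolding W_formula Wm_def by simp
  finally show ?thesis .
qed

end

lemma suff:
  fixes T Q1 Q2 :: mat3 and c1 c2 c3 c4 s s2 :: real
  assumes m1: "m1 P' = s *\<^sub>R (T *v m1 P)" and s: "s^2 = 1" "s2^2 = 1"
    and h1: "c1 = 0 \<or> s *\<^sub>R (transpose T *v p) = p"
    and hQ1: "(c2 = 0 \<and> c4 = 0) \<or> transpose T ** Q1 ** T = Q1"
    and hQ2: "(c3 = 0 \<and> c4 = 0) \<or> transpose T ** Q2 ** T = Q2"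
    and hm2: "(c3 = 0 \<and> c4 = 0) \<or> m2 P' = s2 *\<^sub>R (T *v m2 P)"
  shows "Wm c1 c2 c3 c4 p Q1 Q2 P' = Wm c1 c2 c3 c4 p Q1 Q2 P"
proof -
  have a: "c1 * (m1 P' \<bullet> p) = c1 * (m1 P \<bullet> p)"
  proof -
    have "m1 P' \<bullet> p = m1 P \<bullet> (s *\<^sub>R (transpose T *v p))" by (simp only: m1 inner_T)
    note eq = this
    show ?thesis
    proof (cases "c1 = 0")
      case False
      then have hh: "s *\<^sub>R (transpose T *v p) = p" using h1 by blast
      have "m1 P' \<bullet> p = m1 P \<bullet> p" using eq unfolding hh .
      then show ?thesis by simp
    qed simp
  qed
  have b: "c2 * qf Q1 (m1 P') = c2 * qf Q1 (m1 P)" "c4 * qf Q2 (m1 P') = c4 * qf Q2 (m1 P)"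
    using hQ1 hQ2 by (auto simp: m1 qf_T s)
  have c: "c3 * qf Q2 (m2 P') = c3 * qf Q2 (m2 P)" "c4 * qf Q1 (m2 P') = c4 * qf Q1 (m2 P)"
    using hQ1 hQ2 hm2 by (auto simp: qf_T s)
  show ?thesis unfolding Wm_def distrib_left a b c by (rule refl)
qed




lemma num3_neq: "(1::3) \<noteq> 2" "(1::3) \<noteq> 3" "(2::3) \<noteq> 3" "(2::3) \<noteq> 1" "(3::3) \<noteq> 1" "(3::3) \<noteq> 2"
  by simp_all

lemma mat3_nth: "mat3 a11 a12 a13 a21 a22 a23 a31 a32 a33 $ i $ j =
  (if i = 1 then (if j = 1 then a11 else if j = 2 then a12 else a13)
   else if i = 2 then (if j = 1 then a21 else if j = 2 then a22 else a23)
   else (if j = 1 then a31 else if j = 2 then a32 else a33))"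
  using exhaust_3[of i] exhaust_3[of j] by (auto simp: mat3_def)

lemma mat1_nth: "(mat 1 :: mat3) $ i $ j = (if i = j then 1 else 0)" by (simp add: mat_def)

lemmas ex3m = ex3 mat3_nth mat1_nth diag3_def J3_def R1_def R2_def R3_def

definition Drot :: "real \<Rightarrow> real \<Rightarrow> mat3" where
  "Drot s t = mat3 s 0 0 0 (s * cos t) (- sin t) 0 (s * sin t) (cos t)"

lemma D_inf_eq: "D_inf = {Drot s t | s t. s = 1 \<or> s = -1}" by (simp add: D_inf_def Drot_def)
lemma C_inf_eq: "C_inf = {Drot 1 t | t. True}" by (simp add: C_inf_def Drot_def)

lemma Drot_orth: "s = 1 \<or> s = -1 \<Longrightarrow> orthogonal_matrix (Drot s t)"
  unfolding orthogonal_matrix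
  by (auto simp: ex3m Drot_def algebra_simps power2_eq_square[symmetric])

lemma Drot_det: "s = 1 \<or> s = -1 \<Longrightarrow> det (Drot s t) = 1"
  by (auto simp: det_3 mat3_nth Drot_def algebra_simps power2_eq_square[symmetric])


lemma SO3_orth: "R \<in> SO3 \<Longrightarrow> orthogonal_matrix R" by (simp add: SO3_def rotation_matrix_def)
lemma SO3_det: "R \<in> SO3 \<Longrightarrow> det R = 1" by (simp add: SO3_def rotation_matrix_def)

lemma orth_simps:
  fixes R :: mat3
  assumes "orthogonal_matrix R"
  shows "R ** transpose R = mat 1" "transpose R ** R = mat 1"
    "X ** R ** transpose R = X" "X ** transpose R ** R = X"
  using assms by (auto simp: orthogonal_matrix_def matrix_mul_assoc[symmetric])

lemma TD_orth: "orthogonal_matrix (R::mat3) \<Longrightarrow> orthogonal_matrix D \<Longrightarrow> orthogonal_matrix (transpose R ** D ** R)"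
  by (simp add: orthogonal_matrix_mul)

lemma TD_det: "R \<in> SO3 \<Longrightarrow> det (transpose R ** D ** R) = det (D::mat3)"
  by (simp add: det_mul SO3_det)

lemma prod_SO3:
  assumes "orthogonal_matrix (T::mat3)" "orthogonal_matrix J" "det T * det J = 1" "P \<in> SO3"
  shows "T ** P ** J \<in> SO3"
  using assms by (simp add: SO3_def rotation_matrix_def orthogonal_matrix_mul det_mul)

lemma conj_iff:
  fixes R :: mat3 and H :: "mat3 set" and f :: "mat3 \<Rightarrow> real"
  assumes R: "R \<in> SO3" and H: "\<forall>D\<in>H. orthogonal_matrix D"
  shows "H \<subseteq> conj_set R (phase_group H f) \<longleftrightarrow>
    (\<forall>D\<in>H. (det D = 1 \<longrightarrow> (\<forall>P\<in>SO3. f (transpose R ** D ** R ** P) = f P)) \<and>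
       (det D = -1 \<longrightarrow> (\<forall>P\<in>SO3. \<forall>J\<in>{J\<in>H. det J = -1}. f (transpose R ** D ** R ** P ** J) = f P)))"
proof -
  have oR: "orthogonal_matrix R" using R by (rule SO3_orth)
  have bk: "R ** (transpose R ** D ** R) ** transpose R = D" for D
    by (simp add: matrix_mul_assoc orth_simps[OF oR])
  have fwd: "transpose R ** (R ** T ** transpose R) ** R = T" for T
    by (simp add: matrix_mul_assoc orth_simps[OF oR])
  have "D \<in> conj_set R (phase_group H f) \<longleftrightarrow> transpose R ** D ** R \<in> phase_group H f" if "D \<in> H" for D
  proof
    assume "D \<in> conj_set R (phase_group H f)"
    then obtain T where "T \<in> phase_group H f" "D = R ** T ** transpose R" by (auto simp: conj_set_def)
    then show "transpose R ** D ** R \<in> phase_group H f" using fwd by simp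
  next
    assume "transpose R ** D ** R \<in> phase_group H f"
    then show "D \<in> conj_set R (phase_group H f)" unfolding conj_set_def using bk[of D]
      by (metis image_eqI)
  qed
  moreover have "transpose R ** D ** R \<in> phase_group H f \<longleftrightarrow>
      (det D = 1 \<longrightarrow> (\<forall>P\<in>SO3. f (transpose R ** D ** R ** P) = f P)) \<and>
       (det D = -1 \<longrightarrow> (\<forall>P\<in>SO3. \<forall>J\<in>{J\<in>H. det J = -1}. f (transpose R ** D ** R ** P ** J) = f P))"
    if "D \<in> H" for D
    using TD_orth[OF oR] H that TD_det[OF R] by (simp add: phase_group_def)
  ultimately show ?thesis by (auto simp: subset_iff)
qed

context setting begin

lemma necG:
  fixes R D J :: mat3
  assumes R: "R \<in> SO3" and oD: "orthogonal_matrix D" and oJ: "orthogonal_matrix J" and d: "det D = det J"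
    and inv: "\<forall>P\<in>SO3. f (transpose R ** D ** R ** P ** J) = f P"
    and J1: "\<forall>l. J$l$1 = (if l = 1 then s else 0)" and J2: "\<forall>l. J$l$2 = (if l = 2 then sb else 0)"
    and s: "s^2 = 1" "sb^2 = 1"
  shows "R *v mom_p \<nu> f = s *\<^sub>R (D *v (R *v mom_p \<nu> f))"
    "R ** mom_Q1 \<nu> f ** transpose R = D ** (R ** mom_Q1 \<nu> f ** transpose R) ** transpose D"
    "R ** mom_Q2 \<nu> f ** transpose R = D ** (R ** mom_Q2 \<nu> f ** transpose R) ** transpose D"
proof -
  have oR: "orthogonal_matrix R" using R by (rule SO3_orth)
  note n = nec[OF TD_orth[OF oR oD] oJ _ inv J1 J2 s]
  have dd: "det (transpose R ** D ** R) = det J" using TD_det[OF R] d by simp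
  have "R *v mom_p \<nu> f = R *v (s *\<^sub>R ((transpose R ** D ** R) *v mom_p \<nu> f))"
    using n(1)[OF dd] by metis
  also have "\<dots> = s *\<^sub>R (D *v (R *v mom_p \<nu> f))"
    by (simp add: matrix_vector_mult_scaleR matrix_vector_mul_assoc matrix_mul_assoc orth_simps[OF oR])
  finally show "R *v mom_p \<nu> f = s *\<^sub>R (D *v (R *v mom_p \<nu> f))" .
  have "R ** mom_Q1 \<nu> f ** transpose R = R ** ((transpose R ** D ** R) ** mom_Q1 \<nu> f ** transpose (transpose R ** D ** R)) ** transpose R"
    using n(2)[OF dd] by metis
  also have "\<dots> = D ** (R ** mom_Q1 \<nu> f ** transpose R) ** transpose D"
    by (simp add: matrix_transpose_mul matrix_mul_assoc orth_simps[OF oR])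
  finally show "R ** mom_Q1 \<nu> f ** transpose R = D ** (R ** mom_Q1 \<nu> f ** transpose R) ** transpose D" .
  have "R ** mom_Q2 \<nu> f ** transpose R = R ** ((transpose R ** D ** R) ** mom_Q2 \<nu> f ** transpose (transpose R ** D ** R)) ** transpose R"
    using n(3)[OF dd] by metis
  also have "\<dots> = D ** (R ** mom_Q2 \<nu> f ** transpose R) ** transpose D"
    by (simp add: matrix_transpose_mul matrix_mul_assoc orth_simps[OF oR])
  finally show "R ** mom_Q2 \<nu> f ** transpose R = D ** (R ** mom_Q2 \<nu> f ** transpose R) ** transpose D" .
qed

lemma suffG:
  fixes R D J :: mat3
  assumes R: "R \<in> SO3" and oD: "orthogonal_matrix D" and oJ: "orthogonal_matrix J" and d: "det D * det J = 1"
    and J1: "\<forall>l. J$l$1 = (if l = 1 then s else 0)"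
    and s: "s^2 = 1" "sb^2 = 1"
    and h1: "c1 = 0 \<or> s *\<^sub>R (transpose D *v (R *v mom_p \<nu> f)) = R *v mom_p \<nu> f"
    and hQ1: "(c2 = 0 \<and> c4 = 0) \<or> transpose D ** (R ** mom_Q1 \<nu> f ** transpose R) ** D = R ** mom_Q1 \<nu> f ** transpose R"
    and hQ2: "(c3 = 0 \<and> c4 = 0) \<or> transpose D ** (R ** mom_Q2 \<nu> f ** transpose R) ** D = R ** mom_Q2 \<nu> f ** transpose R"
    and hm2: "(c3 = 0 \<and> c4 = 0) \<or> (\<forall>l. J$l$2 = (if l = 2 then sb else 0))"
  shows "\<forall>P\<in>SO3. f (transpose R ** D ** R ** P ** J) = f P"
proof
  fix P assume P: "P \<in> SO3"
  have oR: "orthogonal_matrix R" using R by (rule SO3_orth)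
  let ?T = "transpose R ** D ** R"
  have P': "?T ** P ** J \<in> SO3"
    using prod_SO3[OF TD_orth[OF oR oD] oJ _ P] TD_det[OF R] d by simp
  have tT: "transpose ?T = transpose R ** transpose D ** R" by (simp add: matrix_transpose_mul matrix_mul_assoc)
  have cp: "s *\<^sub>R (transpose ?T *v mom_p \<nu> f) = mom_p \<nu> f" if "s *\<^sub>R (transpose D *v (R *v mom_p \<nu> f)) = R *v mom_p \<nu> f"
  proof -
    have "s *\<^sub>R (transpose ?T *v mom_p \<nu> f) = transpose R *v (s *\<^sub>R (transpose D *v (R *v mom_p \<nu> f)))"
      unfolding tT by (simp add: matrix_vector_mult_scaleR matrix_vector_mul_assoc matrix_mul_assoc)
    also have "\<dots> = mom_p \<nu> f" unfolding that
      by (simp add: matrix_vector_mul_assoc orth_simps[OF oR])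
    finally show ?thesis .
  qed
  have cQ: "transpose ?T ** Q ** ?T = Q" if "transpose D ** (R ** Q ** transpose R) ** D = R ** Q ** transpose R" for Q
  proof -
    have "transpose ?T ** Q ** ?T = transpose R ** (transpose D ** (R ** Q ** transpose R) ** D) ** R"
      unfolding tT by (simp add: matrix_mul_assoc)
    also have "\<dots> = Q" unfolding that by (simp add: matrix_mul_assoc orth_simps[OF oR])
    finally show ?thesis .
  qed
  have "Wm c1 c2 c3 c4 (mom_p \<nu> f) (mom_Q1 \<nu> f) (mom_Q2 \<nu> f) (?T ** P ** J) =
        Wm c1 c2 c3 c4 (mom_p \<nu> f) (mom_Q1 \<nu> f) (mom_Q2 \<nu> f) P"
  proof (rule suff[OF col1_mult[OF J1] s])
    show "c1 = 0 \<or> s *\<^sub>R (transpose ?T *v mom_p \<nu> f) = mom_p \<nu> f" using h1 cp by blast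
    show "c2 = 0 \<and> c4 = 0 \<or> transpose ?T ** mom_Q1 \<nu> f ** ?T = mom_Q1 \<nu> f" using hQ1 cQ by blast
    show "c3 = 0 \<and> c4 = 0 \<or> transpose ?T ** mom_Q2 \<nu> f ** ?T = mom_Q2 \<nu> f" using hQ2 cQ by blast
    show "c3 = 0 \<and> c4 = 0 \<or> m2 (?T ** P ** J) = sb *\<^sub>R (?T *v m2 P)" using hm2 col2_mult by blast
  qed
  then show "f (?T ** P ** J) = f P" using f_eqW[OF P P'] by simp
qed

end



lemma diag3_mult: "diag3 a b c ** diag3 a' b' c' = diag3 (a*a') (b*b') (c*c')"
  by (simp add: ex3m vec_eq_iff)
lemma diag3_orth: "a^2 = 1 \<Longrightarrow> b^2 = 1 \<Longrightarrow> c^2 = 1 \<Longrightarrow> orthogonal_matrix (diag3 a b c)"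
  unfolding orthogonal_matrix by (simp add: ex3m power2_eq_square)
lemma diag3_det: "det (diag3 a b c) = a * b * c"
  by (simp add: det_3 ex3m)
lemma diag3_col1: "\<forall>l. diag3 a b c $ l $ 1 = (if l = 1 then a else 0)"
  by (simp add: ex3m)
lemma diag3_col2: "\<forall>l. diag3 a b c $ l $ 2 = (if l = 2 then b else 0)"
  by (simp add: ex3m)
lemma diag3_inv: "is_diag B \<Longrightarrow> a^2 = 1 \<Longrightarrow> b^2 = 1 \<Longrightarrow> c^2 = 1 \<Longrightarrow>
  transpose (diag3 a b c) ** B ** diag3 a b c = B"
  by (auto simp: is_diag_def ex3m power2_eq_square)
lemma diag3_conj: "(diag3 a b c ** B ** transpose (diag3 a b c)) $ i $ j =
   (if i = 1 then a else if i = 2 then b else c) * (if j = 1 then a else if j = 2 then b else c) * B $ i $ j"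
  using exhaust_3[of i] exhaust_3[of j] by (auto simp: ex3m)

lemma is_diag3: "is_diag B \<longleftrightarrow> B$1$2 = 0 \<and> B$1$3 = 0 \<and> B$2$1 = 0 \<and> B$2$3 = 0 \<and> B$3$1 = 0 \<and> B$3$2 = 0"
  unfolding is_diag_def by (auto simp: forall_3)

lemma cs_id: "cos t * (cos t * x) + sin t * (sin t * x) = (x::real)"
proof -
  have e: "sin t * sin t = 1 - cos t * cos t" using sin_cos_squared_add[of t] by (simp add: power2_eq_square)
  have "cos t * (cos t * x) + sin t * (sin t * x) = (cos t * cos t) * x + (sin t * sin t) * x"
    by (simp only: mult.assoc)
  also have "\<dots> = x" unfolding e by (simp add: algebra_simps)
  finally show ?thesis .
qed

lemma Drot_inv: "is_diag B \<Longrightarrow> B$2$2 = B$3$3 \<Longrightarrow> s = 1 \<or> s = -1 \<Longrightarrow>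
  transpose (Drot s t) ** B ** Drot s t = B"
  by (auto simp: is_diag3 ex3m Drot_def algebra_simps power2_eq_square[symmetric] cs_id)
lemma DrotJ_inv: "is_diag B \<Longrightarrow> B$2$2 = B$3$3 \<Longrightarrow> s = 1 \<or> s = -1 \<Longrightarrow>
  transpose (Drot s t ** J3) ** B ** (Drot s t ** J3) = B"
  by (auto simp: is_diag3 ex3m Drot_def algebra_simps power2_eq_square[symmetric] cs_id)

lemma Drot_col1: "\<forall>l. Drot s t $ l $ 1 = (if l = 1 then s else 0)"
  by (simp add: ex3m Drot_def)
lemma DrotJ_col1: "\<forall>l. (Drot s t ** J3) $ l $ 1 = (if l = 1 then s else 0)"
  by (simp add: ex3m Drot_def)
lemma J3_orth: "orthogonal_matrix J3" unfolding J3_def by (rule diag3_orth) simp_all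
lemma J3_det: "det J3 = -1" by (simp add: J3_def diag3_det)

lemma Drot_v: "v$2 = 0 \<Longrightarrow> v$3 = 0 \<Longrightarrow> transpose (Drot 1 t) *v v = v"
  by (simp add: ex3m Drot_def)
lemma DrotJ_v: "v$2 = 0 \<Longrightarrow> v$3 = 0 \<Longrightarrow> transpose (Drot 1 t ** J3) *v v = v"
  by (simp add: ex3m Drot_def)

lemma Drot_pi: "Drot 1 pi = diag3 1 (-1) (-1)" by (simp add: Drot_def diag3_def)
lemma Drot_0: "Drot (-1) 0 = diag3 (-1) (-1) 1" by (simp add: Drot_def diag3_def)
lemma Drot_conj90: "(Drot 1 (pi/2) ** B ** transpose (Drot 1 (pi/2))) $ 2 $ 2 = B $ 3 $ 3"
  by (simp add: ex3m Drot_def)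




lemma ent: "B = M \<Longrightarrow> B $ i $ j = M $ i $ j" by simp
lemma mat1_col1: "\<forall>l. (mat 1::mat3) $ l $ 1 = (if l = 1 then 1 else 0)" by (simp add: mat1_nth)
lemma mat1_col2: "\<forall>l. (mat 1::mat3) $ l $ 2 = (if l = 2 then 1 else 0)" by (simp add: mat1_nth)

lemma D_inf_h_cases: "D \<in> D_inf_h \<Longrightarrow> \<exists>s t. (s = 1 \<or> s = -1) \<and> (D = Drot s t \<or> D = Drot s t ** J3)"
  unfolding D_inf_h_def D_inf_eq by auto
lemma D_inf_h_orth: "\<forall>D\<in>D_inf_h. orthogonal_matrix D"
  using D_inf_h_cases Drot_orth J3_orth orthogonal_matrix_mul by metis
lemma Drot_in_h: "s = 1 \<or> s = -1 \<Longrightarrow> Drot s t \<in> D_inf_h"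
  unfolding D_inf_h_def D_inf_eq by auto
lemma DrotJ_det: "s = 1 \<or> s = -1 \<Longrightarrow> det (Drot s t ** J3) = -1"
  by (simp add: det_mul Drot_det J3_det)

context setting begin

lemma key1:
  fixes R D :: mat3
  assumes R: "R \<in> SO3" and oD: "orthogonal_matrix D" and d: "det D = 1"
    and inv: "\<forall>P\<in>SO3. f (transpose R ** D ** R ** P) = f P"
  shows "R *v mom_p \<nu> f = D *v (R *v mom_p \<nu> f)"
    "R ** mom_Q1 \<nu> f ** transpose R = D ** (R ** mom_Q1 \<nu> f ** transpose R) ** transpose D"
    "R ** mom_Q2 \<nu> f ** transpose R = D ** (R ** mom_Q2 \<nu> f ** transpose R) ** transpose D"
proof -
  have inv': "\<forall>P\<in>SO3. f (transpose R ** D ** R ** P ** mat 1) = f P" using inv by simp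
  note n = necG[OF R oD orthogonal_matrix_id _ inv' mat1_col1 mat1_col2]
  show "R *v mom_p \<nu> f = D *v (R *v mom_p \<nu> f)"
    "R ** mom_Q1 \<nu> f ** transpose R = D ** (R ** mom_Q1 \<nu> f ** transpose R) ** transpose D"
    "R ** mom_Q2 \<nu> f ** transpose R = D ** (R ** mom_Q2 \<nu> f ** transpose R) ** transpose D"
    using n d by (simp_all add: det_I)
qed

lemma suff1:
  fixes R D :: mat3
  assumes R: "R \<in> SO3" and oD: "orthogonal_matrix D" and d: "det D = 1"
    and h1: "c1 = 0 \<or> transpose D *v (R *v mom_p \<nu> f) = R *v mom_p \<nu> f"
    and hQ1: "(c2 = 0 \<and> c4 = 0) \<or> transpose D ** (R ** mom_Q1 \<nu> f ** transpose R) ** D = R ** mom_Q1 \<nu> f ** transpose R"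
    and hQ2: "(c3 = 0 \<and> c4 = 0) \<or> transpose D ** (R ** mom_Q2 \<nu> f ** transpose R) ** D = R ** mom_Q2 \<nu> f ** transpose R"
  shows "\<forall>P\<in>SO3. f (transpose R ** D ** R ** P) = f P"
  using suffG[where sb=1, OF R oD orthogonal_matrix_id _ mat1_col1] d h1 hQ1 hQ2 mat1_col2
  by (simp add: det_I)

lemma partA:
  fixes R :: mat3
  assumes R: "R \<in> SO3" and c: "c1 = 0" "c3 = 0" "c4 = 0"
  shows "D_inf_h \<subseteq> conj_set R (phase_group D_inf_h f) \<longleftrightarrow>
     is_diag (R ** mom_Q1 \<nu> f ** transpose R) \<and>
     (R ** mom_Q1 \<nu> f ** transpose R) $ 2 $ 2 = (R ** mom_Q1 \<nu> f ** transpose R) $ 3 $ 3"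
proof -
  define B where "B = R ** mom_Q1 \<nu> f ** transpose R"
  show ?thesis unfolding conj_iff[OF R D_inf_h_orth] B_def[symmetric]
  proof
    assume H: "\<forall>D\<in>D_inf_h. (det D = 1 \<longrightarrow> (\<forall>P\<in>SO3. f (transpose R ** D ** R ** P) = f P)) \<and>
       (det D = -1 \<longrightarrow> (\<forall>P\<in>SO3. \<forall>J\<in>{J\<in>D_inf_h. det J = -1}. f (transpose R ** D ** R ** P ** J) = f P))"
    have key: "B = D ** B ** transpose D" if "s = 1 \<or> s = -1" "D = Drot s t" for D s t
    proof -
      have "D \<in> D_inf_h" "det D = 1" "orthogonal_matrix D" using that Drot_in_h Drot_det Drot_orth by auto
      then show ?thesis using key1(2)[OF R] H unfolding B_def by blast
    qed
    have k1: "B = diag3 1 (-1) (-1) ** B ** transpose (diag3 1 (-1) (-1))"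
      using key[of 1 _ pi] by (simp add: Drot_pi)
    have k2: "B = diag3 (-1) (-1) 1 ** B ** transpose (diag3 (-1) (-1) 1)"
      using key[of "-1" _ 0] by (simp add: Drot_0)
    have k3: "B = Drot 1 (pi/2) ** B ** transpose (Drot 1 (pi/2))"
      using key[of 1 _ "pi/2"] by simp
    show "is_diag B \<and> B $ 2 $ 2 = B $ 3 $ 3"
      using ent[OF k1, of 1 2] ent[OF k1, of 1 3] ent[OF k1, of 2 1] ent[OF k1, of 3 1]
        ent[OF k2, of 2 3] ent[OF k2, of 3 2] ent[OF k3, of 2 2]
      unfolding is_diag3 diag3_conj Drot_conj90 by simp
  next
    assume B: "is_diag B \<and> B $ 2 $ 2 = B $ 3 $ 3"
    show "\<forall>D\<in>D_inf_h. (det D = 1 \<longrightarrow> (\<forall>P\<in>SO3. f (transpose R ** D ** R ** P) = f P)) \<and>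
       (det D = -1 \<longrightarrow> (\<forall>P\<in>SO3. \<forall>J\<in>{J\<in>D_inf_h. det J = -1}. f (transpose R ** D ** R ** P ** J) = f P))"
    proof
      fix D assume "D \<in> D_inf_h"
      then obtain s t where s: "s = 1 \<or> s = -1" and D: "D = Drot s t \<or> D = Drot s t ** J3"
        using D_inf_h_cases by blast
      show "(det D = 1 \<longrightarrow> (\<forall>P\<in>SO3. f (transpose R ** D ** R ** P) = f P)) \<and>
       (det D = -1 \<longrightarrow> (\<forall>P\<in>SO3. \<forall>J\<in>{J\<in>D_inf_h. det J = -1}. f (transpose R ** D ** R ** P ** J) = f P))"
        using D
      proof
        assume D: "D = Drot s t"
        have "\<forall>P\<in>SO3. f (transpose R ** D ** R ** P) = f P"
          using suff1[OF R Drot_orth[OF s] Drot_det[OF s]] c Drot_inv[of B s t] B s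
          unfolding D B_def by blast
        then show ?thesis using Drot_det[OF s] D by simp
      next
        assume D: "D = Drot s t ** J3"
        have "\<forall>P\<in>SO3. f (transpose R ** D ** R ** P ** J) = f P" if J: "J \<in> D_inf_h" "det J = -1" for J
        proof -
          obtain s' t' where s': "s' = 1 \<or> s' = -1" and J': "J = Drot s' t' \<or> J = Drot s' t' ** J3"
            using D_inf_h_cases[OF J(1)] by blast
          then have J': "J = Drot s' t' ** J3" using J(2) Drot_det by force
          have s'2: "s'^2 = 1" using s' by auto
          show ?thesis
            using suffG[where D="Drot s t ** J3" and J="Drot s' t' ** J3" and s=s' and sb=1,
                OF R orthogonal_matrix_mul[OF Drot_orth[OF s] J3_orth]
                orthogonal_matrix_mul[OF Drot_orth[OF s'] J3_orth] _ DrotJ_col1 s'2]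
              DrotJ_det[OF s] DrotJ_det[OF s'] c DrotJ_inv[of B s t] B s
            unfolding D J' B_def by simp
        qed
        then show ?thesis using DrotJ_det[OF s] D by simp
      qed
    qed
  qed
qed

end



lemma C_inf_v_cases: "D \<in> C_inf_v \<Longrightarrow> \<exists>t. D = Drot 1 t \<or> D = Drot 1 t ** J3"
  unfolding C_inf_v_def C_inf_eq by auto
lemma C_inf_v_orth: "\<forall>D\<in>C_inf_v. orthogonal_matrix D"
  using C_inf_v_cases Drot_orth J3_orth orthogonal_matrix_mul by (metis)
lemma Drot_in_v: "Drot 1 t \<in> C_inf_v"
  unfolding C_inf_v_def C_inf_eq by auto
lemma J3_in_v: "J3 \<in> C_inf_v"
proof -
  have "Drot 1 0 ** J3 = J3" by (simp add: ex3m Drot_def vec_eq_iff)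
  moreover have "Drot 1 0 ** J3 \<in> (\<lambda>A. A ** J3) ` {Drot 1 t |t. True}" by blast
  ultimately show ?thesis unfolding C_inf_v_def C_inf_eq by simp
qed
lemma diag3_vec: "(diag3 a b c *v v) $ 1 = a * v$1" "(diag3 a b c *v v) $ 2 = b * v$2" "(diag3 a b c *v v) $ 3 = c * v$3"
  by (simp_all add: ex3m)
lemma diag3_v: "v$2 = 0 \<Longrightarrow> v$3 = 0 \<Longrightarrow> transpose (diag3 1 b c) *v v = v"
  by (simp add: ex3m)
lemma J3_diag: "J3 = diag3 1 1 (-1)" by (simp add: J3_def)

context setting begin

lemma partB:
  fixes R :: mat3
  assumes R: "R \<in> SO3" and c: "c3 = 0" "c4 = 0"
  shows "C_inf_v \<subseteq> conj_set R (phase_group C_inf_v f) \<longleftrightarrow>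
     is_diag (R ** mom_Q1 \<nu> f ** transpose R) \<and>
     (R ** mom_Q1 \<nu> f ** transpose R) $ 2 $ 2 = (R ** mom_Q1 \<nu> f ** transpose R) $ 3 $ 3 \<and>
     (R *v mom_p \<nu> f) $ 2 = 0 \<and> (R *v mom_p \<nu> f) $ 3 = 0"
proof -
  define B where "B = R ** mom_Q1 \<nu> f ** transpose R"
  define v where "v = R *v mom_p \<nu> f"
  show ?thesis unfolding conj_iff[OF R C_inf_v_orth] B_def[symmetric] v_def[symmetric]
  proof
    assume H: "\<forall>D\<in>C_inf_v. (det D = 1 \<longrightarrow> (\<forall>P\<in>SO3. f (transpose R ** D ** R ** P) = f P)) \<and>
       (det D = -1 \<longrightarrow> (\<forall>P\<in>SO3. \<forall>J\<in>{J\<in>C_inf_v. det J = -1}. f (transpose R ** D ** R ** P ** J) = f P))"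
    have key: "B = D ** B ** transpose D \<and> v = D *v v" if "D = Drot 1 t" for D t
    proof -
      have "D \<in> C_inf_v" "det D = 1" "orthogonal_matrix D" using that Drot_in_v Drot_det Drot_orth by auto
      then show ?thesis using key1(1,2)[OF R] H unfolding B_def v_def by blast
    qed
    have k1: "B = diag3 1 (-1) (-1) ** B ** transpose (diag3 1 (-1) (-1))" "v = diag3 1 (-1) (-1) *v v"
      using key[of _ pi] by (simp_all add: Drot_pi)
    have k3: "B = Drot 1 (pi/2) ** B ** transpose (Drot 1 (pi/2))"
      using key[of _ "pi/2"] by simp
    have "\<forall>P\<in>SO3. f (transpose R ** J3 ** R ** P ** J3) = f P"
      using H J3_in_v J3_det by blast
    then have k2: "B = J3 ** B ** transpose J3"
      using necG(2)[OF R J3_orth J3_orth refl _ _ _ _ _, of 1 1] unfolding B_def J3_diag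
      by (simp add: diag3_col1 diag3_col2)
    show "is_diag B \<and> B $ 2 $ 2 = B $ 3 $ 3 \<and> v $ 2 = 0 \<and> v $ 3 = 0"
      using ent[OF k1(1), of 1 2] ent[OF k1(1), of 1 3] ent[OF k1(1), of 2 1] ent[OF k1(1), of 3 1]
        ent[OF k2, of 2 3] ent[OF k2, of 3 2] ent[OF k3, of 2 2]
        arg_cong[OF k1(2), of "\<lambda>x. x$2"] arg_cong[OF k1(2), of "\<lambda>x. x$3"]
      unfolding is_diag3 diag3_conj Drot_conj90 J3_diag diag3_vec by simp
  next
    assume B: "is_diag B \<and> B $ 2 $ 2 = B $ 3 $ 3 \<and> v $ 2 = 0 \<and> v $ 3 = 0"
    show "\<forall>D\<in>C_inf_v. (det D = 1 \<longrightarrow> (\<forall>P\<in>SO3. f (transpose R ** D ** R ** P) = f P)) \<and>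
       (det D = -1 \<longrightarrow> (\<forall>P\<in>SO3. \<forall>J\<in>{J\<in>C_inf_v. det J = -1}. f (transpose R ** D ** R ** P ** J) = f P))"
    proof
      fix D assume "D \<in> C_inf_v"
      then obtain t where D: "D = Drot 1 t \<or> D = Drot 1 t ** J3"
        using C_inf_v_cases by blast
      have s: "(1::real) = 1 \<or> (1::real) = -1" by simp
      show "(det D = 1 \<longrightarrow> (\<forall>P\<in>SO3. f (transpose R ** D ** R ** P) = f P)) \<and>
       (det D = -1 \<longrightarrow> (\<forall>P\<in>SO3. \<forall>J\<in>{J\<in>C_inf_v. det J = -1}. f (transpose R ** D ** R ** P ** J) = f P))"
        using D
      proof
        assume D: "D = Drot 1 t"
        have "\<forall>P\<in>SO3. f (transpose R ** D ** R ** P) = f P"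
          using suff1[OF R Drot_orth[OF s] Drot_det[OF s]] c Drot_inv[of B 1 t] Drot_v[of v t] B
          unfolding D B_def v_def by blast
        then show ?thesis using Drot_det[OF s] D by simp
      next
        assume D: "D = Drot 1 t ** J3"
        have "\<forall>P\<in>SO3. f (transpose R ** D ** R ** P ** J) = f P" if J: "J \<in> C_inf_v" "det J = -1" for J
        proof -
          obtain t' where J': "J = Drot 1 t' \<or> J = Drot 1 t' ** J3"
            using C_inf_v_cases[OF J(1)] by blast
          then have J': "J = Drot 1 t' ** J3" using J(2) Drot_det by force
          show ?thesis
            using suffG[where D="Drot 1 t ** J3" and J="Drot 1 t' ** J3" and s=1 and sb=1,
                OF R orthogonal_matrix_mul[OF Drot_orth[OF s] J3_orth]
                orthogonal_matrix_mul[OF Drot_orth[OF s] J3_orth] _ DrotJ_col1]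
              DrotJ_det[OF s] c DrotJ_inv[of B 1 t] DrotJ_v[of v t] B
            unfolding D J' B_def v_def by simp
        qed
        then show ?thesis using DrotJ_det[OF s] D by simp
      qed
    qed
  qed
qed

end



lemma mat1_diag: "(mat 1 :: mat3) = diag3 1 1 1" by (simp add: ex3m vec_eq_iff)

lemma D_2h_cases: "D \<in> D_2h \<Longrightarrow> \<exists>a b c. D = diag3 a b c \<and> a^2 = 1 \<and> b^2 = 1 \<and> c^2 = 1"
  unfolding D_2h_def mat1_diag R1_def R2_def R3_def J3_def diag3_mult by force
lemma C_2v_cases: "D \<in> C_2v \<Longrightarrow> \<exists>b c. D = diag3 1 b c \<and> b^2 = 1 \<and> c^2 = 1"
  unfolding C_2v_def mat1_diag R1_def J3_def diag3_mult by force
lemma D_2h_orth: "\<forall>D\<in>D_2h. orthogonal_matrix D"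
  using D_2h_cases diag3_orth by blast
lemma C_2v_orth: "\<forall>D\<in>C_2v. orthogonal_matrix D"
  using C_2v_cases diag3_orth by fastforce
lemma R1_in: "R1 \<in> D_2h" "R2 \<in> D_2h" "R1 \<in> C_2v" "J3 \<in> C_2v"
  by (simp_all add: D_2h_def C_2v_def)

context setting begin

lemma partC:
  fixes R :: mat3
  assumes R: "R \<in> SO3" and c: "c1 = 0"
  shows "D_2h \<subseteq> conj_set R (phase_group D_2h f) \<longleftrightarrow>
     is_diag (R ** mom_Q1 \<nu> f ** transpose R) \<and> is_diag (R ** mom_Q2 \<nu> f ** transpose R)"
proof -
  define B where "B = R ** mom_Q1 \<nu> f ** transpose R"
  define B2 where "B2 = R ** mom_Q2 \<nu> f ** transpose R"
  show ?thesis unfolding conj_iff[OF R D_2h_orth] B_def[symmetric] B2_def[symmetric]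
  proof
    assume H: "\<forall>D\<in>D_2h. (det D = 1 \<longrightarrow> (\<forall>P\<in>SO3. f (transpose R ** D ** R ** P) = f P)) \<and>
       (det D = -1 \<longrightarrow> (\<forall>P\<in>SO3. \<forall>J\<in>{J\<in>D_2h. det J = -1}. f (transpose R ** D ** R ** P ** J) = f P))"
    have key: "B = D ** B ** transpose D \<and> B2 = D ** B2 ** transpose D" if "D \<in> D_2h" "det D = 1" for D
      using key1(2,3)[OF R _ that(2)] H that D_2h_orth unfolding B_def B2_def by blast
    have dR: "det R1 = 1" "det R2 = 1" by (simp_all add: R1_def R2_def diag3_det)
    have k1: "B = diag3 1 (-1) (-1) ** B ** transpose (diag3 1 (-1) (-1))"
         "B2 = diag3 1 (-1) (-1) ** B2 ** transpose (diag3 1 (-1) (-1))"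
      using key[OF R1_in(1) dR(1)] unfolding R1_def by auto
    have k2: "B = diag3 (-1) 1 (-1) ** B ** transpose (diag3 (-1) 1 (-1))"
         "B2 = diag3 (-1) 1 (-1) ** B2 ** transpose (diag3 (-1) 1 (-1))"
      using key[OF R1_in(2) dR(2)] unfolding R2_def by auto
    show "is_diag B \<and> is_diag B2"
      using ent[OF k1(1), of 1 2] ent[OF k1(1), of 1 3] ent[OF k1(1), of 2 1] ent[OF k1(1), of 3 1]
        ent[OF k2(1), of 2 3] ent[OF k2(1), of 3 2]
        ent[OF k1(2), of 1 2] ent[OF k1(2), of 1 3] ent[OF k1(2), of 2 1] ent[OF k1(2), of 3 1]
        ent[OF k2(2), of 2 3] ent[OF k2(2), of 3 2]
      unfolding is_diag3 diag3_conj by simp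
  next
    assume B: "is_diag B \<and> is_diag B2"
    show "\<forall>D\<in>D_2h. (det D = 1 \<longrightarrow> (\<forall>P\<in>SO3. f (transpose R ** D ** R ** P) = f P)) \<and>
       (det D = -1 \<longrightarrow> (\<forall>P\<in>SO3. \<forall>J\<in>{J\<in>D_2h. det J = -1}. f (transpose R ** D ** R ** P ** J) = f P))"
    proof (intro ballI conjI impI)
      fix D assume "D \<in> D_2h"
      then obtain a b cc where D: "D = diag3 a b cc" and abc: "a^2 = 1" "b^2 = 1" "cc^2 = 1"
        using D_2h_cases by blast
      have inv: "transpose D ** B ** D = B" "transpose D ** B2 ** D = B2"
        using diag3_inv B abc unfolding D by auto
      have oD: "orthogonal_matrix D" unfolding D using diag3_orth abc by blast
      {
        fix P assume "det D = 1" "P \<in> SO3"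
        then show "f (transpose R ** D ** R ** P) = f P"
          using suff1[OF R oD] c inv unfolding B_def B2_def by blast
      }
      {
        fix P J assume d: "det D = -1" and P: "P \<in> SO3" and J: "J \<in> {J\<in>D_2h. det J = -1}"
        then obtain a' b' c' where J': "J = diag3 a' b' c'" and abc': "a'^2 = 1" "b'^2 = 1" "c'^2 = 1"
          using D_2h_cases by blast
        have oJ: "orthogonal_matrix J" unfolding J' using diag3_orth abc' by blast
        have "\<forall>P\<in>SO3. f (transpose R ** D ** R ** P ** J) = f P"
          using suffG[OF R oD oJ _ _ abc'(1,2)] d J diag3_col1[of a' b' c'] diag3_col2[of a' b' c'] c inv
          unfolding J'[symmetric] B_def B2_def by simp
        then show "f (transpose R ** D ** R ** P ** J) = f P" using P by blast
      }
    qed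
  qed
qed

lemma partD:
  fixes R :: mat3
  assumes R: "R \<in> SO3"
  shows "C_2v \<subseteq> conj_set R (phase_group C_2v f) \<longleftrightarrow>
     is_diag (R ** mom_Q1 \<nu> f ** transpose R) \<and> is_diag (R ** mom_Q2 \<nu> f ** transpose R) \<and>
     (R *v mom_p \<nu> f) $ 2 = 0 \<and> (R *v mom_p \<nu> f) $ 3 = 0"
proof -
  define B where "B = R ** mom_Q1 \<nu> f ** transpose R"
  define B2 where "B2 = R ** mom_Q2 \<nu> f ** transpose R"
  define v where "v = R *v mom_p \<nu> f"
  show ?thesis unfolding conj_iff[OF R C_2v_orth] B_def[symmetric] B2_def[symmetric] v_def[symmetric]
  proof
    assume H: "\<forall>D\<in>C_2v. (det D = 1 \<longrightarrow> (\<forall>P\<in>SO3. f (transpose R ** D ** R ** P) = f P)) \<and>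
       (det D = -1 \<longrightarrow> (\<forall>P\<in>SO3. \<forall>J\<in>{J\<in>C_2v. det J = -1}. f (transpose R ** D ** R ** P ** J) = f P))"
    have dR: "det R1 = 1" by (simp_all add: R1_def diag3_det)
    have "\<forall>P\<in>SO3. f (transpose R ** R1 ** R ** P) = f P" using H R1_in(3) dR by blast
    note kk = key1[OF R _ dR this]
    have oR1: "orthogonal_matrix R1" using C_2v_orth R1_in(3) by blast
    have k1: "B = diag3 1 (-1) (-1) ** B ** transpose (diag3 1 (-1) (-1))"
         "B2 = diag3 1 (-1) (-1) ** B2 ** transpose (diag3 1 (-1) (-1))"
         "v = diag3 1 (-1) (-1) *v v"
      using kk[OF oR1] unfolding R1_def B_def B2_def v_def by auto
    have "\<forall>P\<in>SO3. f (transpose R ** J3 ** R ** P ** J3) = f P"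
      using H R1_in(4) J3_det by blast
    then have k2: "B = J3 ** B ** transpose J3" "B2 = J3 ** B2 ** transpose J3"
      using necG(2,3)[OF R J3_orth J3_orth refl _ _ _ _ _, of 1 1] unfolding B_def B2_def J3_diag
      by (simp_all add: diag3_col1 diag3_col2)
    show "is_diag B \<and> is_diag B2 \<and> v $ 2 = 0 \<and> v $ 3 = 0"
      using ent[OF k1(1), of 1 2] ent[OF k1(1), of 1 3] ent[OF k1(1), of 2 1] ent[OF k1(1), of 3 1]
        ent[OF k2(1), of 2 3] ent[OF k2(1), of 3 2]
        ent[OF k1(2), of 1 2] ent[OF k1(2), of 1 3] ent[OF k1(2), of 2 1] ent[OF k1(2), of 3 1]
        ent[OF k2(2), of 2 3] ent[OF k2(2), of 3 2]
        arg_cong[OF k1(3), of "\<lambda>x. x$2"] arg_cong[OF k1(3), of "\<lambda>x. x$3"]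
      unfolding is_diag3 diag3_conj J3_diag diag3_vec by simp
  next
    assume B: "is_diag B \<and> is_diag B2 \<and> v $ 2 = 0 \<and> v $ 3 = 0"
    show "\<forall>D\<in>C_2v. (det D = 1 \<longrightarrow> (\<forall>P\<in>SO3. f (transpose R ** D ** R ** P) = f P)) \<and>
       (det D = -1 \<longrightarrow> (\<forall>P\<in>SO3. \<forall>J\<in>{J\<in>C_2v. det J = -1}. f (transpose R ** D ** R ** P ** J) = f P))"
    proof (intro ballI conjI impI)
      fix D assume "D \<in> C_2v"
      then obtain b cc where D: "D = diag3 1 b cc" and abc: "b^2 = 1" "cc^2 = 1"
        using C_2v_cases by blast
      have inv: "transpose D ** B ** D = B" "transpose D ** B2 ** D = B2"
        using diag3_inv B abc unfolding D by auto
      have vv: "transpose D *v v = v" unfolding D using diag3_v B by blast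
      have oD: "orthogonal_matrix D" unfolding D using diag3_orth abc by simp
      {
        fix P assume "det D = 1" "P \<in> SO3"
        then show "f (transpose R ** D ** R ** P) = f P"
          using suff1[OF R oD] inv vv unfolding B_def B2_def v_def by blast
      }
      {
        fix P J assume d: "det D = -1" and P: "P \<in> SO3" and J: "J \<in> {J\<in>C_2v. det J = -1}"
        then obtain b' c' where J': "J = diag3 1 b' c'" and abc': "b'^2 = 1" "c'^2 = 1"
          using C_2v_cases by blast
        have oJ: "orthogonal_matrix J" unfolding J' using diag3_orth abc' by simp
        have "\<forall>P\<in>SO3. f (transpose R ** D ** R ** P ** J) = f P"
          using suffG[where s=1, OF R oD oJ _ _ _ abc'(1)] d J diag3_col1[of 1 b' c'] diag3_col2[of 1 b' c'] inv vv
          unfolding J'[symmetric] B_def B2_def v_def by simp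
        then show "f (transpose R ** D ** R ** P ** J) = f P" using P by blast
      }
    qed
  qed
qed

end


theorem lemma1:
  fixes \<nu> :: "mat3 measure" and f :: "mat3 \<Rightarrow> real" and R :: mat3
    and c c1 c2 c3 c4 :: real
  assumes haar: "haar_SO3 \<nu>"
    and cpos: "c > 0"
    and R: "R \<in> SO3"
    and crit: "crit_point \<nu> (kern c1 c2 c3 c4) f"
  defines "p \<equiv> mom_p \<nu> f" and "Q1 \<equiv> mom_Q1 \<nu> f" and "Q2 \<equiv> mom_Q2 \<nu> f"
  shows
    "(c1 = 0 \<and> c3 = 0 \<and> c4 = 0 \<longrightarrow>
       (D_inf_h \<subseteq> conj_set R (phase_group D_inf_h f) \<longleftrightarrow>
        is_diag (R ** Q1 ** transpose R) \<and>
        (R ** Q1 ** transpose R) $ 2 $ 2 = (R ** Q1 ** transpose R) $ 3 $ 3))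
   \<and> (c3 = 0 \<and> c4 = 0 \<longrightarrow>
       (C_inf_v \<subseteq> conj_set R (phase_group C_inf_v f) \<longleftrightarrow>
        is_diag (R ** Q1 ** transpose R) \<and>
        (R ** Q1 ** transpose R) $ 2 $ 2 = (R ** Q1 ** transpose R) $ 3 $ 3 \<and>
        (R *v p) $ 2 = 0 \<and> (R *v p) $ 3 = 0))
   \<and> (c1 = 0 \<longrightarrow>
       (D_2h \<subseteq> conj_set R (phase_group D_2h f) \<longleftrightarrow>
        is_diag (R ** Q1 ** transpose R) \<and> is_diag (R ** Q2 ** transpose R)))
   \<and> (C_2v \<subseteq> conj_set R (phase_group C_2v f) \<longleftrightarrow>
        is_diag (R ** Q1 ** transpose R) \<and> is_diag (R ** Q2 ** transpose R) \<and>
        (R *v p) $ 2 = 0 \<and> (R *v p) $ 3 = 0)"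
proof -
  interpret setting \<nu> f c1 c2 c3 c4 using haar crit by unfold_locales
  show ?thesis unfolding p_def Q1_def Q2_def
    using partA[OF R] partB[OF R] partC[OF R] partD[OF R] by blast
qed

end
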